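(* For every round $t$ and every node $s\in S$, the GLR statistic $Z_s(t)=\inf_{\bm{\lambda}\in\mathrm{Alt}_s(\hat{\bm{\mu}}(t))}\sum_{\ell\in\mathcal{D}(s)}N_\ell(t)\,d(\hat\mu_\ell(t),\lambda_\ell)$ satisfies the following recursion. If $a_{s_0}(\hat{\bm{\mu}}(t))=$'win': for a leaf $s$, $Z_s(t)=N_s(t)d(\hat\mu_s(t),\theta)$ if $\hat\mu_s(t)\ge\theta$ and $Z_s(t)=0$ otherwise; $Z_s(t)=\sum_{c\in\mathcal{C}(s)}Z_c(t)$ if $L(s)=$MAX; $Z_s(t)=\min_{c\in\mathcal{C}(s)}Z_c(t)$ if $L(s)=$MIN. If $a_{s_0}(\hat{\bm{\mu}}(t))=$'lose': for a leaf $s$, $Z_s(t)=N_s(t)d(\hat\mu_s(t),\theta)$ if $\hat\mu_s(t)<\theta$ and $Z_s(t)=0$ otherwise; $Z_s(t)=\sum_{c\in\mathcal{C}(s)}Z_c(t)$ if $L(s)=$MIN; $Z_s(t)=\min_{c\in\mathcal{C}(s)}Z_c(t)$ if $L(s)=$MAX.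
   Context: $\mathcal{T}$ is a finite rooted tree with node set $S$, root $s_0$, children sets $\mathcal{C}(s)$, leaf set $\mathcal{L}(\mathcal{T})$, and $\mathcal{D}(s)$ the set of leaves descending from $s$ ($\{s\}$ for a leaf). Internal nodes have labels $L(s)\in\{\text{MAX},\text{MIN}\}$. $X\subseteq\mathbb{R}$ is the mean-parameter set of a one-parameter exponential family, $d(x,y)$ the KL divergence between members with means $x$ and $y$, $\theta\in X$ a threshold. For $\bm{\lambda}$: $V_s(\bm{\lambda})=\lambda_s$ at a leaf, max (resp. min) of children's values at MAX (resp. MIN) nodes; $a_s(\bm{\lambda})=$'win' iff $V_s(\bm{\lambda})\ge\theta$, else 'lose'. At each round a leaf is sampled and a reward observed; $N_\ell(t)$ is the number of samples of leaf $\ell$ up to round $t$ and $\hat\mu_\ell(t)\in X$ its empirical mean; $\hat{\bm{\mu}}(t)=(\hat\mu_\ell(t))_\ell$. $\mathrm{Alt}_s(\hat{\bm{\mu}}(t))=\{\bm{\lambda}\in X^{\mathcal{D}(s)}:a_s(\bm{\lambda})\neq a_{s_0}(\hat{\bm{\mu}}(t))\}$. *)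

theory Defs
  imports "HOL-Analysis.Analysis" "HOL-Library.FuncSet"
begin

datatype label = LMAX | LMIN

text \<open>Nodes of the
tree are its subtrees; the root is the tree itself.\<close>

datatype 'a gtree = Leaf 'a | Node label "'a gtree list"

fun leaves :: "'a gtree \<Rightarrow> 'a list" where
  "leaves (Leaf a) = [a]"
| "leaves (Node l cs) = concat (map leaves cs)"

definition desc :: "'a gtree \<Rightarrow> 'a set" where
  "desc s = set (leaves s)"

fun nodes_list :: "'a gtree \<Rightarrow> 'a gtree list" where
  "nodes_list (Leaf a) = [Leaf a]"
| "nodes_list (Node l cs) = Node l cs # concat (map nodes_list cs)"

definition nodes :: "'a gtree \<Rightarrow> 'a gtree set" where
  "nodes T = set (nodes_list T)"

fun children :: "'a gtree \<Rightarrow> 'a gtree set" where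
  "children (Leaf a) = {}"
| "children (Node l cs) = set cs"

text \<open>Well-formed tree: every internal node has at least one child and leaf
identifiers are pairwise distinct (so distinct nodes are distinct objects).\<close>
fun internal_nonempty :: "'a gtree \<Rightarrow> bool" where
  "internal_nonempty (Leaf a) = True"
| "internal_nonempty (Node l cs) = (cs \<noteq> [] \<and> (\<forall>c\<in>set cs. internal_nonempty c))"

definition wf_tree :: "'a gtree \<Rightarrow> bool" where
  "wf_tree T \<longleftrightarrow> internal_nonempty T \<and> distinct (leaves T)"

fun val :: "'a gtree \<Rightarrow> ('a \<Rightarrow> real) \<Rightarrow> real" where
  "val (Leaf a) lam = lam a"
| "val (Node LMAX cs) lam = Max (set (map (\<lambda>c. val c lam) cs))"
| "val (Node LMIN cs) lam = Min (set (map (\<lambda>c. val c lam) cs))"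

text \<open>a_s(lambda) = 'win' iff V_s(lambda) >= theta (True encodes 'win').\<close>
definition win :: "real \<Rightarrow> 'a gtree \<Rightarrow> ('a \<Rightarrow> real) \<Rightarrow> bool" where
  "win \<theta> s lam \<longleftrightarrow> val s lam \<ge> \<theta>"

text \<open>A (regular, minimal) one-parameter exponential family with densities
h(x) exp(eta x - b(eta)), natural parameter eta in an open interval Theta,
and log-partition function b, which is differentiable with strictly
increasing derivative (strict convexity).  The mean of the member with
natural parameter eta is b'(eta).\<close>
definition exp_family :: "(real \<Rightarrow> real) \<Rightarrow> real set \<Rightarrow> bool" where
  "exp_family b \<Theta> \<longleftrightarrow> open \<Theta> \<and> is_interval \<Theta> \<and> \<Theta> \<noteq> {} \<and>
     (\<forall>\<eta>\<in>\<Theta>. (b has_real_derivative deriv b \<eta>) (at \<eta>)) \<and>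
     strict_mono_on \<Theta> (deriv b)"

definition mean_set :: "(real \<Rightarrow> real) \<Rightarrow> real set \<Rightarrow> real set" where
  "mean_set b \<Theta> = deriv b ` \<Theta>"

definition nat_param :: "(real \<Rightarrow> real) \<Rightarrow> real set \<Rightarrow> real \<Rightarrow> real" where
  "nat_param b \<Theta> x = inv_into \<Theta> (deriv b) x"

text \<open>d(x,y) = KL(P_x || P_y) between the members with means x and y:
 b(eta_y) - b(eta_x) - x (eta_y - eta_x).\<close>
definition kl :: "(real \<Rightarrow> real) \<Rightarrow> real set \<Rightarrow> real \<Rightarrow> real \<Rightarrow> real" where
  "kl b \<Theta> x y = b (nat_param b \<Theta> y) - b (nat_param b \<Theta> x)
                   - x * (nat_param b \<Theta> y - nat_param b \<Theta> x)"

definition Alt :: "(real \<Rightarrow> real) \<Rightarrow> real set \<Rightarrow> real \<Rightarrow> 'a gtree \<Rightarrow> 'a gtree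
                   \<Rightarrow> ('a \<Rightarrow> real) \<Rightarrow> ('a \<Rightarrow> real) set" where
  "Alt b \<Theta> \<theta> T s mu = {lam \<in> desc s \<rightarrow>\<^sub>E mean_set b \<Theta>. win \<theta> s lam \<noteq> win \<theta> T mu}"

definition GLR :: "(real \<Rightarrow> real) \<Rightarrow> real set \<Rightarrow> real \<Rightarrow> 'a gtree \<Rightarrow> 'a gtree
                   \<Rightarrow> ('a \<Rightarrow> nat) \<Rightarrow> ('a \<Rightarrow> real) \<Rightarrow> real" where
  "GLR b \<Theta> \<theta> T s N mu =
     Inf ((\<lambda>lam. \<Sum>l\<in>desc s. real (N l) * kl b \<Theta> (mu l) (lam l)) ` Alt b \<Theta> \<theta> T s mu)"

end

theory Submission
  imports Defs
begin

lemma ef_facts: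
  assumes "exp_family b \<Theta>"
  shows "open \<Theta>" "is_interval \<Theta>" "\<And>\<eta>. \<eta>\<in>\<Theta> \<Longrightarrow> (b has_real_derivative deriv b \<eta>) (at \<eta>)"
    "strict_mono_on \<Theta> (deriv b)"
  using assms unfolding exp_family_def by auto

lemma np_in:
  assumes "x \<in> mean_set b \<Theta>"
  shows "nat_param b \<Theta> x \<in> \<Theta>" "deriv b (nat_param b \<Theta> x) = x"
  using assms unfolding mean_set_def nat_param_def
  by (simp_all add: inv_into_into f_inv_into_f)

lemma np_of:
  assumes "exp_family b \<Theta>" "\<eta> \<in> \<Theta>"
  shows "nat_param b \<Theta> (deriv b \<eta>) = \<eta>"
proof -
  have "inj_on (deriv b) \<Theta>" using ef_facts(4)[OF assms(1)] strict_mono_on_imp_inj_on by blast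
  then show ?thesis unfolding nat_param_def using assms(2) by (rule inv_into_f_f)
qed

lemma np_mono:
  assumes "exp_family b \<Theta>" "x \<in> mean_set b \<Theta>" "y \<in> mean_set b \<Theta>" "x \<le> y"
  shows "nat_param b \<Theta> x \<le> nat_param b \<Theta> y"
proof (rule ccontr)
  assume neg: "\<not> ?thesis"
  have "deriv b (nat_param b \<Theta> y) < deriv b (nat_param b \<Theta> x)"
    using ef_facts(4)[OF assms(1)] np_in(1)[OF assms(3)] np_in(1)[OF assms(2)]
    by (rule strict_mono_onD) (use neg in simp)
  then show False using np_in[OF assms(2)] np_in[OF assms(3)] assms(4) by simp
qed

lemma b_bounds:
  assumes "exp_family b \<Theta>" "e1 \<in> \<Theta>" "e2 \<in> \<Theta>" "e1 \<le> e2"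
  shows "deriv b e1 * (e2 - e1) \<le> b e2 - b e1 \<and> b e2 - b e1 \<le> deriv b e2 * (e2 - e1)"
proof (cases "e1 = e2")
  case True then show ?thesis by simp
next
  case False
  then have lt: "e1 < e2" using assms(4) by simp
  have sub: "x \<in> \<Theta>" if "e1 \<le> x" "x \<le> e2" for x
  proof -
    have "\<forall>a\<in>\<Theta>. \<forall>b\<in>\<Theta>. \<forall>x. a \<le> x \<and> x \<le> b \<longrightarrow> x \<in> \<Theta>"
      using ef_facts(2)[OF assms(1)] unfolding is_interval_1 .
    then show ?thesis using assms(2,3) that by blast
  qed
  have der: "(b has_real_derivative deriv b x) (at x)" if "e1 \<le> x" "x \<le> e2" for x
    using ef_facts(3)[OF assms(1) sub[OF that]] .
  obtain z where z: "e1 < z" "z < e2" "b e2 - b e1 = (e2 - e1) * deriv b z"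
    using MVT2[where f=b and f'="deriv b", OF lt der] by blast
  have zin: "z \<in> \<Theta>" using sub[of z] z(1,2) by linarith
  have d1: "deriv b e1 < deriv b z"
    using ef_facts(4)[OF assms(1)] assms(2) zin z(1) by (rule strict_mono_onD)
  have d2: "deriv b z < deriv b e2"
    using ef_facts(4)[OF assms(1)] zin assms(3) z(2) by (rule strict_mono_onD)
  have p: "e2 - e1 \<ge> 0" using lt by simp
  have m1: "deriv b e1 * (e2 - e1) \<le> deriv b z * (e2 - e1)"
    using d1 p by (intro mult_right_mono) simp_all
  have m2: "deriv b z * (e2 - e1) \<le> deriv b e2 * (e2 - e1)"
    using d2 p by (intro mult_right_mono) simp_all
  show ?thesis using z(3) m1 m2 by (simp add: mult.commute)
qed

lemma kl_mono_left:
  assumes "exp_family b \<Theta>" "x \<in> mean_set b \<Theta>" "y1 \<in> mean_set b \<Theta>" "y2 \<in> mean_set b \<Theta>"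
    "y1 \<le> y2" "y2 \<le> x"
  shows "kl b \<Theta> x y2 \<le> kl b \<Theta> x y1"
proof -
  define e1 e2 where "e1 = nat_param b \<Theta> y1" and "e2 = nat_param b \<Theta> y2"
  have "e1 \<le> e2" unfolding e1_def e2_def using np_mono[OF assms(1,3,4,5)] .
  then have "b e2 - b e1 \<le> deriv b e2 * (e2 - e1)"
    using b_bounds[OF assms(1) np_in(1)[OF assms(3)] np_in(1)[OF assms(4)]] unfolding e1_def e2_def by blast
  moreover have "deriv b e2 = y2" using np_in(2)[OF assms(4)] unfolding e2_def .
  moreover have "y2 * (e2 - e1) \<le> x * (e2 - e1)" using \<open>e1 \<le> e2\<close> assms(6)
    by (simp add: mult_right_mono)
  ultimately show ?thesis unfolding kl_def e1_def[symmetric] e2_def[symmetric]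
    by (simp add: algebra_simps)
qed

lemma kl_mono_right:
  assumes "exp_family b \<Theta>" "x \<in> mean_set b \<Theta>" "y1 \<in> mean_set b \<Theta>" "y2 \<in> mean_set b \<Theta>"
    "x \<le> y1" "y1 \<le> y2"
  shows "kl b \<Theta> x y1 \<le> kl b \<Theta> x y2"
proof -
  define e1 e2 where "e1 = nat_param b \<Theta> y1" and "e2 = nat_param b \<Theta> y2"
  have "e1 \<le> e2" unfolding e1_def e2_def using np_mono[OF assms(1,3,4,6)] .
  then have "deriv b e1 * (e2 - e1) \<le> b e2 - b e1"
    using b_bounds[OF assms(1) np_in(1)[OF assms(3)] np_in(1)[OF assms(4)]] unfolding e1_def e2_def by blast
  moreover have "deriv b e1 = y1" using np_in(2)[OF assms(3)] unfolding e1_def .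
  moreover have "x * (e2 - e1) \<le> y1 * (e2 - e1)" using \<open>e1 \<le> e2\<close> assms(5)
    by (simp add: mult_right_mono)
  ultimately show ?thesis unfolding kl_def e1_def[symmetric] e2_def[symmetric]
    by (simp add: algebra_simps)
qed

lemma kl_self: "kl b \<Theta> x x = 0"
  unfolding kl_def by simp

lemma kl_nonneg:
  assumes "exp_family b \<Theta>" "x \<in> mean_set b \<Theta>" "y \<in> mean_set b \<Theta>"
  shows "0 \<le> kl b \<Theta> x y"
proof (cases "y \<le> x")
  case True
  then show ?thesis using kl_mono_left[OF assms(1,2) assms(3) assms(2) True] kl_self by simp
next
  case False
  then show ?thesis using kl_mono_right[OF assms(1,2) assms(2) assms(3)] kl_self by simp
qed

lemma inf_char:
  fixes S :: "real set"
  assumes "\<And>x. x \<in> S \<Longrightarrow> a \<le> x" "\<And>e. e > 0 \<Longrightarrow> \<exists>x\<in>S. x < a + e"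
  shows "Inf S = a"
proof -
  obtain x0 where "x0 \<in> S" using assms(2)[of 1] by force
  then have ne: "S \<noteq> {}" by blast
  have bdd: "bdd_below S" unfolding bdd_below_def using assms(1) by blast
  have ge: "a \<le> Inf S" by (rule cInf_greatest[OF ne assms(1)])
  have "Inf S \<le> a"
  proof (rule ccontr)
    assume neg: "\<not> Inf S \<le> a"
    then have "Inf S - a > 0" by simp
    then obtain x where x: "x \<in> S" "x < a + (Inf S - a)" using assms(2) by blast
    have "Inf S \<le> x" using cInf_lower[OF x(1) bdd] .
    then show False using x(2) by simp
  qed
  then show ?thesis using ge by simp
qed

lemma below_theta:
  assumes "exp_family b \<Theta>" "\<theta> \<in> mean_set b \<Theta>" "d > 0"
  shows "\<exists>\<eta>\<in>\<Theta>. \<eta> < nat_param b \<Theta> \<theta> \<and> nat_param b \<Theta> \<theta> - d < \<eta>"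
proof -
  define e where "e = nat_param b \<Theta> \<theta>"
  have "e \<in> \<Theta>" unfolding e_def using np_in(1)[OF assms(2)] .
  then obtain r where r: "r > 0" "ball e r \<subseteq> \<Theta>" using ef_facts(1)[OF assms(1)] openE by metis
  define h where "h = e - min d r / 2"
  have "dist e h < r" unfolding h_def dist_real_def using r(1) assms(3) by simp
  then have "h \<in> \<Theta>" using r(2) by auto
  moreover have "h < e" "e - d < h" unfolding h_def using r(1) assms(3) by simp_all
  ultimately show ?thesis unfolding e_def[symmetric] by blast
qed

lemma exists_below:
  assumes "exp_family b \<Theta>" "\<theta> \<in> mean_set b \<Theta>"
  shows "\<exists>y\<in>mean_set b \<Theta>. y < \<theta>"
proof -
  obtain \<eta> where e: "\<eta> \<in> \<Theta>" "\<eta> < nat_param b \<Theta> \<theta>" using below_theta[OF assms, of 1] by auto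
  have "deriv b \<eta> < deriv b (nat_param b \<Theta> \<theta>)"
    using ef_facts(4)[OF assms(1)] e(1) np_in(1)[OF assms(2)] e(2) by (rule strict_mono_onD)
  then have "deriv b \<eta> < \<theta>" using np_in(2)[OF assms(2)] by simp
  moreover have "deriv b \<eta> \<in> mean_set b \<Theta>" unfolding mean_set_def using e(1) by simp
  ultimately show ?thesis by blast
qed

lemma leaf_inf_below:
  assumes ef: "exp_family b \<Theta>" and th: "\<theta> \<in> mean_set b \<Theta>" and x: "x \<in> mean_set b \<Theta>"
    and n: "n \<ge> 0"
  shows "Inf ((\<lambda>y. n * kl b \<Theta> x y) ` {y \<in> mean_set b \<Theta>. y < \<theta>})
         = (if \<theta> \<le> x then n * kl b \<Theta> x \<theta> else 0)"
proof (cases "\<theta> \<le> x")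
  case False
  have "Inf ((\<lambda>y. n * kl b \<Theta> x y) ` {y \<in> mean_set b \<Theta>. y < \<theta>}) = 0"
  proof (rule inf_char)
    fix z assume "z \<in> (\<lambda>y. n * kl b \<Theta> x y) ` {y \<in> mean_set b \<Theta>. y < \<theta>}"
    then obtain y where y: "y \<in> mean_set b \<Theta>" "z = n * kl b \<Theta> x y" by blast
    have "0 \<le> kl b \<Theta> x y" using kl_nonneg[OF ef x y(1)] .
    then show "0 \<le> z" using y(2) n by simp
  next
    fix e :: real assume "e > 0"
    moreover have "x \<in> {y \<in> mean_set b \<Theta>. y < \<theta>}" using x False by simp
    ultimately show "\<exists>z\<in>(\<lambda>y. n * kl b \<Theta> x y) ` {y \<in> mean_set b \<Theta>. y < \<theta>}. z < 0 + e"
      using kl_self[of b \<Theta> x] by force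
  qed
  then show ?thesis using False by simp
next
  case True
  have "Inf ((\<lambda>y. n * kl b \<Theta> x y) ` {y \<in> mean_set b \<Theta>. y < \<theta>}) = n * kl b \<Theta> x \<theta>"
  proof (rule inf_char)
    fix z assume "z \<in> (\<lambda>y. n * kl b \<Theta> x y) ` {y \<in> mean_set b \<Theta>. y < \<theta>}"
    then obtain y where y: "y \<in> mean_set b \<Theta>" "y < \<theta>" "z = n * kl b \<Theta> x y" by blast
    have "kl b \<Theta> x \<theta> \<le> kl b \<Theta> x y"
      using kl_mono_left[OF ef x y(1) th] y(2) True by simp
    then show "n * kl b \<Theta> x \<theta> \<le> z" using y(3) n by (simp add: mult_left_mono)
  next
    fix e :: real assume e: "e > 0"
    define ex where "ex = nat_param b \<Theta> x"
    define e0 where "e0 = nat_param b \<Theta> \<theta>"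
    define h where "h = (\<lambda>\<eta>. n * (b \<eta> - b ex - x * (\<eta> - ex)))"
    have e0in: "e0 \<in> \<Theta>" unfolding e0_def using np_in(1)[OF th] .
    have "isCont b e0" using ef_facts(3)[OF ef e0in] by (rule DERIV_isCont)
    then have "isCont h e0" unfolding h_def by (intro continuous_intros)
    then have "h \<midarrow>e0\<rightarrow> h e0" unfolding isCont_def .
    from LIM_D[OF this e] obtain s where s: "s > 0"
      "\<forall>z. z \<noteq> e0 \<and> norm (z - e0) < s \<longrightarrow> norm (h z - h e0) < e" by blast
    obtain \<eta> where eta: "\<eta> \<in> \<Theta>" "\<eta> < e0" "e0 - s < \<eta>"
      using below_theta[OF ef th s(1)] unfolding e0_def by blast
    have "norm (h \<eta> - h e0) < e" using s(2) eta(2,3) by simp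
    then have hl: "h \<eta> < h e0 + e" by simp
    define y where "y = deriv b \<eta>"
    have yX: "y \<in> mean_set b \<Theta>" unfolding y_def mean_set_def using eta(1) by simp
    have "deriv b \<eta> < deriv b e0"
      using ef_facts(4)[OF ef] eta(1) e0in eta(2) by (rule strict_mono_onD)
    then have ylt: "y < \<theta>" unfolding y_def e0_def using np_in(2)[OF th] by simp
    have npy: "nat_param b \<Theta> y = \<eta>" unfolding y_def using np_of[OF ef eta(1)] .
    have "n * kl b \<Theta> x y = h \<eta>" unfolding kl_def h_def npy ex_def by simp
    moreover have "h e0 = n * kl b \<Theta> x \<theta>" unfolding kl_def h_def e0_def ex_def by simp
    ultimately have "n * kl b \<Theta> x y < n * kl b \<Theta> x \<theta> + e" using hl by simp
    moreover have "y \<in> {y \<in> mean_set b \<Theta>. y < \<theta>}" using yX ylt by simp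
    ultimately show "\<exists>z\<in>(\<lambda>y. n * kl b \<Theta> x y) ` {y \<in> mean_set b \<Theta>. y < \<theta>}.
        z < n * kl b \<Theta> x \<theta> + e" by blast
  qed
  then show ?thesis using True by simp
qed

lemma leaf_inf_above:
  assumes ef: "exp_family b \<Theta>" and th: "\<theta> \<in> mean_set b \<Theta>" and x: "x \<in> mean_set b \<Theta>"
    and n: "n \<ge> 0"
  shows "Inf ((\<lambda>y. n * kl b \<Theta> x y) ` {y \<in> mean_set b \<Theta>. \<theta> \<le> y})
         = (if x < \<theta> then n * kl b \<Theta> x \<theta> else 0)"
proof (cases "x < \<theta>")
  case False
  have "Inf ((\<lambda>y. n * kl b \<Theta> x y) ` {y \<in> mean_set b \<Theta>. \<theta> \<le> y}) = 0"
  proof (rule inf_char)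
    fix z assume "z \<in> (\<lambda>y. n * kl b \<Theta> x y) ` {y \<in> mean_set b \<Theta>. \<theta> \<le> y}"
    then obtain y where y: "y \<in> mean_set b \<Theta>" "z = n * kl b \<Theta> x y" by blast
    have "0 \<le> kl b \<Theta> x y" using kl_nonneg[OF ef x y(1)] .
    then show "0 \<le> z" using y(2) n by simp
  next
    fix e :: real assume "e > 0"
    moreover have "x \<in> {y \<in> mean_set b \<Theta>. \<theta> \<le> y}" using x False by simp
    ultimately show "\<exists>z\<in>(\<lambda>y. n * kl b \<Theta> x y) ` {y \<in> mean_set b \<Theta>. \<theta> \<le> y}. z < 0 + e"
      using kl_self[of b \<Theta> x] by force
  qed
  then show ?thesis using False by simp
next
  case True
  have "Inf ((\<lambda>y. n * kl b \<Theta> x y) ` {y \<in> mean_set b \<Theta>. \<theta> \<le> y}) = n * kl b \<Theta> x \<theta>"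
  proof (rule inf_char)
    fix z assume "z \<in> (\<lambda>y. n * kl b \<Theta> x y) ` {y \<in> mean_set b \<Theta>. \<theta> \<le> y}"
    then obtain y where y: "y \<in> mean_set b \<Theta>" "\<theta> \<le> y" "z = n * kl b \<Theta> x y" by blast
    have "kl b \<Theta> x \<theta> \<le> kl b \<Theta> x y"
      using kl_mono_right[OF ef x th y(1)] y(2) True by simp
    then show "n * kl b \<Theta> x \<theta> \<le> z" using y(3) n by (simp add: mult_left_mono)
  next
    fix e :: real assume "e > 0"
    moreover have "\<theta> \<in> {y \<in> mean_set b \<Theta>. \<theta> \<le> y}" using th by simp
    ultimately show "\<exists>z\<in>(\<lambda>y. n * kl b \<Theta> x y) ` {y \<in> mean_set b \<Theta>. \<theta> \<le> y}.
        z < n * kl b \<Theta> x \<theta> + e" by force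
  qed
  then show ?thesis using True by simp
qed

lemma sum_inf:
  fixes g :: "'a \<Rightarrow> real \<Rightarrow> real" and D :: "'c \<Rightarrow> 'a set" and A :: "'c \<Rightarrow> ('a \<Rightarrow> real) set"
  assumes fin: "finite C" and finD: "\<And>c. c\<in>C \<Longrightarrow> finite (D c)"
    and disj: "\<And>c c'. c\<in>C \<Longrightarrow> c'\<in>C \<Longrightarrow> c \<noteq> c' \<Longrightarrow> D c \<inter> D c' = {}"
    and U: "U = (\<Union>c\<in>C. D c)"
    and ne: "\<And>c. c\<in>C \<Longrightarrow> A c \<noteq> {}" and sub: "\<And>c. c\<in>C \<Longrightarrow> A c \<subseteq> D c \<rightarrow>\<^sub>E X"
    and nn: "\<And>l y. l \<in> U \<Longrightarrow> y \<in> X \<Longrightarrow> 0 \<le> g l y"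
  shows "Inf ((\<lambda>lam. \<Sum>l\<in>U. g l (lam l)) ` {lam \<in> U \<rightarrow>\<^sub>E X. \<forall>c\<in>C. restrict lam (D c) \<in> A c})
     = (\<Sum>c\<in>C. Inf ((\<lambda>lam. \<Sum>l\<in>D c. g l (lam l)) ` A c))"
proof -
  define I where "I = (\<lambda>c. Inf ((\<lambda>lam. \<Sum>l\<in>D c. g l (lam l)) ` A c))"
  have split: "(\<Sum>l\<in>U. g l (lam l)) = (\<Sum>c\<in>C. \<Sum>l\<in>D c. g l (restrict lam (D c) l))" for lam
  proof -
    have "(\<Sum>l\<in>U. g l (lam l)) = (\<Sum>c\<in>C. \<Sum>l\<in>D c. g l (lam l))"
      unfolding U by (rule sum.UNION_disjoint[OF fin]) (use finD disj in blast)+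
    also have "\<dots> = (\<Sum>c\<in>C. \<Sum>l\<in>D c. g l (restrict lam (D c) l))"
      by (intro sum.cong refl) simp
    finally show ?thesis .
  qed
  have cnn: "0 \<le> (\<Sum>l\<in>D c. g l (lam l))" if c: "c \<in> C" and lam: "lam \<in> A c" for c lam
  proof (rule sum_nonneg)
    fix l assume l: "l \<in> D c"
    then have "l \<in> U" using c U by blast
    moreover have "lam l \<in> X" using l lam sub[OF c] by blast
    ultimately show "0 \<le> g l (lam l)" by (rule nn)
  qed
  have bdd: "bdd_below ((\<lambda>lam. \<Sum>l\<in>D c. g l (lam l)) ` A c)" if c: "c\<in>C" for c
  proof (rule bdd_belowI[of _ 0])
    fix x assume "x \<in> (\<lambda>lam. \<Sum>l\<in>D c. g l (lam l)) ` A c"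
    then obtain lam where "lam \<in> A c" "x = (\<Sum>l\<in>D c. g l (lam l))" by blast
    then show "0 \<le> x" using cnn[OF c] by simp
  qed
  show ?thesis unfolding I_def[symmetric]
  proof (rule inf_char)
    fix z assume "z \<in> (\<lambda>lam. \<Sum>l\<in>U. g l (lam l)) ` {lam \<in> U \<rightarrow>\<^sub>E X. \<forall>c\<in>C. restrict lam (D c) \<in> A c}"
    then obtain lam where lam: "\<forall>c\<in>C. restrict lam (D c) \<in> A c" "z = (\<Sum>l\<in>U. g l (lam l))"
      by blast
    have "I c \<le> (\<Sum>l\<in>D c. g l (restrict lam (D c) l))" if c: "c\<in>C" for c
      unfolding I_def using cInf_lower[OF imageI[OF lam(1)[rule_format, OF c]] bdd[OF c]] .
    then show "(\<Sum>c\<in>C. I c) \<le> z" unfolding lam(2) split by (rule sum_mono)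
  next
    fix e :: real assume e: "e > 0"
    define e' where "e' = e / (real (card C) + 1)"
    have e'pos: "e' > 0" using e unfolding e'_def by simp
    have "\<forall>c\<in>C. \<exists>lam. lam \<in> A c \<and> (\<Sum>l\<in>D c. g l (lam l)) < I c + e'"
    proof
      fix c assume c: "c\<in>C"
      have "I c < I c + e'" using e'pos by simp
      then have "\<exists>v\<in>(\<lambda>lam. \<Sum>l\<in>D c. g l (lam l)) ` A c. v < I c + e'"
        unfolding I_def by (intro cInf_lessD) (use ne[OF c] in auto)
      then show "\<exists>lam. lam \<in> A c \<and> (\<Sum>l\<in>D c. g l (lam l)) < I c + e'" by blast
    qed
    from bchoice[OF this] obtain F where F0: "\<forall>c\<in>C. F c \<in> A c \<and> (\<Sum>l\<in>D c. g l (F c l)) < I c + e'"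
      by blast
    have F: "\<And>c. c\<in>C \<Longrightarrow> F c \<in> A c"
      "\<And>c. c \<in> C \<Longrightarrow> (\<Sum>l\<in>D c. g l (F c l)) < I c + e'" using F0 by simp_all
    define lam0 where "lam0 = (\<lambda>l. if l \<in> U then F (SOME c. c \<in> C \<and> l \<in> D c) l else undefined)"
    have pick: "(SOME c. c \<in> C \<and> l \<in> D c) = c" if "c\<in>C" "l \<in> D c" for c l
    proof (rule some_equality)
      show "c \<in> C \<and> l \<in> D c" using that by simp
      fix c' assume h: "c' \<in> C \<and> l \<in> D c'"
      show "c' = c"
      proof (rule ccontr)
        assume "c' \<noteq> c"
        then have "D c' \<inter> D c = {}" using disj h that(1) by simp
        then show False using h that(2) by blast
      qed
    qed
    have res: "restrict lam0 (D c) = F c" if c: "c\<in>C" for c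
    proof
      fix l show "restrict lam0 (D c) l = F c l"
      proof (cases "l \<in> D c")
        case True then have "l \<in> U" using U c by blast
        then show ?thesis using True pick[OF c True] unfolding lam0_def by simp
      next
        case False
        have "F c \<in> D c \<rightarrow>\<^sub>E X" using sub[OF c] F(1)[OF c] by (rule subsetD)
        then have "F c l = undefined" using False by (rule PiE_arb)
        then show ?thesis using False by simp
      qed
    qed
    have lam0in: "lam0 \<in> U \<rightarrow>\<^sub>E X"
    proof (rule PiE_I)
      fix l assume l: "l \<in> U"
      then obtain c where c: "c\<in>C" "l \<in> D c" using U by blast
      have "F c \<in> D c \<rightarrow>\<^sub>E X" using sub[OF c(1)] F(1)[OF c(1)] by (rule subsetD)
      then have "F c l \<in> X" using c(2) by (rule PiE_mem)
      then show "lam0 l \<in> X" using l pick[OF c] unfolding lam0_def by simp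
    next
      fix l assume "l \<notin> U" then show "lam0 l = undefined" unfolding lam0_def by simp
    qed
    have "(\<Sum>l\<in>U. g l (lam0 l)) = (\<Sum>c\<in>C. \<Sum>l\<in>D c. g l (F c l))"
      unfolding split by (intro sum.cong refl) (simp add: res)
    also have "\<dots> \<le> (\<Sum>c\<in>C. I c + e')"
      by (intro sum_mono less_imp_le F(2))
    also have "\<dots> = (\<Sum>c\<in>C. I c) + real (card C) * e'" by (simp add: sum.distrib)
    also have "\<dots> < (\<Sum>c\<in>C. I c) + e"
    proof -
      have "real (card C) * e' = e * (real (card C) / (real (card C) + 1))"
        unfolding e'_def by simp
      also have "\<dots> < e * 1" using e by (intro mult_strict_left_mono) simp_all
      finally show ?thesis by simp
    qed
    finally have lt: "(\<Sum>l\<in>U. g l (lam0 l)) < (\<Sum>c\<in>C. I c) + e" .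
    have "lam0 \<in> {lam \<in> U \<rightarrow>\<^sub>E X. \<forall>c\<in>C. restrict lam (D c) \<in> A c}"
      using lam0in res F(1) by simp
    then show "\<exists>z\<in>(\<lambda>lam. \<Sum>l\<in>U. g l (lam l)) ` {lam \<in> U \<rightarrow>\<^sub>E X. \<forall>c\<in>C. restrict lam (D c) \<in> A c}.
        z < (\<Sum>c\<in>C. I c) + e" using lt by blast
  qed
qed

lemma min_inf:
  fixes g :: "'a \<Rightarrow> real \<Rightarrow> real" and D :: "'c \<Rightarrow> 'a set" and A :: "'c \<Rightarrow> ('a \<Rightarrow> real) set"
  assumes fin: "finite C" and Cne: "C \<noteq> {}" and finD: "\<And>c. c\<in>C \<Longrightarrow> finite (D c)"
    and U: "U = (\<Union>c\<in>C. D c)"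
    and ne: "\<And>c. c\<in>C \<Longrightarrow> A c \<noteq> {}" and sub: "\<And>c. c\<in>C \<Longrightarrow> A c \<subseteq> D c \<rightarrow>\<^sub>E X"
    and nn: "\<And>l y. l \<in> U \<Longrightarrow> y \<in> X \<Longrightarrow> 0 \<le> g l y"
    and m: "\<And>l. l \<in> U \<Longrightarrow> m l \<in> X" and m0: "\<And>l. l \<in> U \<Longrightarrow> g l (m l) = 0"
  shows "Inf ((\<lambda>lam. \<Sum>l\<in>U. g l (lam l)) ` {lam \<in> U \<rightarrow>\<^sub>E X. \<exists>c\<in>C. restrict lam (D c) \<in> A c})
     = Min ((\<lambda>c. Inf ((\<lambda>lam. \<Sum>l\<in>D c. g l (lam l)) ` A c)) ` C)"
proof -
  define I where "I = (\<lambda>c. Inf ((\<lambda>lam. \<Sum>l\<in>D c. g l (lam l)) ` A c))"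
  have finU: "finite U" unfolding U using fin finD by blast
  have DU: "D c \<subseteq> U" if "c \<in> C" for c using that U by blast
  have cnn: "0 \<le> (\<Sum>l\<in>D c. g l (lam l))" if c: "c \<in> C" and lam: "lam \<in> A c" for c lam
  proof (rule sum_nonneg)
    fix l assume l: "l \<in> D c"
    then have "l \<in> U" using c U by blast
    moreover have "lam l \<in> X" using sub[OF c] lam l by (blast intro: PiE_mem)
    ultimately show "0 \<le> g l (lam l)" by (rule nn)
  qed
  have bdd: "bdd_below ((\<lambda>lam. \<Sum>l\<in>D c. g l (lam l)) ` A c)" if c: "c\<in>C" for c
  proof (rule bdd_belowI[of _ 0])
    fix x assume "x \<in> (\<lambda>lam. \<Sum>l\<in>D c. g l (lam l)) ` A c"
    then obtain lam where "lam \<in> A c" "x = (\<Sum>l\<in>D c. g l (lam l))" by blast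
    then show "0 \<le> x" using cnn[OF c] by simp
  qed
  have finI: "finite (I ` C)" using fin by simp
  show ?thesis unfolding I_def[symmetric]
  proof (rule inf_char)
    fix z assume "z \<in> (\<lambda>lam. \<Sum>l\<in>U. g l (lam l)) ` {lam \<in> U \<rightarrow>\<^sub>E X. \<exists>c\<in>C. restrict lam (D c) \<in> A c}"
    then obtain lam c where lam: "lam \<in> U \<rightarrow>\<^sub>E X" "c \<in> C" "restrict lam (D c) \<in> A c"
      "z = (\<Sum>l\<in>U. g l (lam l))" by blast
    have "Min (I ` C) \<le> I c" using finI lam(2) by simp
    also have "I c \<le> (\<Sum>l\<in>D c. g l (restrict lam (D c) l))"
      unfolding I_def using cInf_lower[OF imageI[OF lam(3)] bdd[OF lam(2)]] .
    also have "\<dots> = (\<Sum>l\<in>D c. g l (lam l))" by (intro sum.cong refl) simp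
    also have "\<dots> \<le> (\<Sum>l\<in>U. g l (lam l))"
    proof (rule sum_mono2[OF finU DU[OF lam(2)]])
      fix l assume "l \<in> U - D c"
      then have "l \<in> U" by simp
      moreover have "lam l \<in> X" using lam(1) \<open>l \<in> U\<close> by (rule PiE_mem)
      ultimately show "0 \<le> g l (lam l)" by (rule nn)
    qed
    finally show "Min (I ` C) \<le> z" using lam(4) by simp
  next
    fix e :: real assume e: "e > 0"
    have "Min (I ` C) \<in> I ` C" using finI Cne by (intro Min_in) simp_all
    then obtain c0 where c0: "c0 \<in> C" "I c0 = Min (I ` C)" by auto
    have "I c0 < I c0 + e" using e by simp
    then have "\<exists>v\<in>(\<lambda>lam. \<Sum>l\<in>D c0. g l (lam l)) ` A c0. v < I c0 + e"
      unfolding I_def by (intro cInf_lessD) (use ne[OF c0(1)] in auto)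
    then obtain lam1 where lam1: "lam1 \<in> A c0" "(\<Sum>l\<in>D c0. g l (lam1 l)) < I c0 + e" by blast
    have lam1P: "lam1 \<in> D c0 \<rightarrow>\<^sub>E X" using sub[OF c0(1)] lam1(1) by (rule subsetD)
    define lam0 where "lam0 = (\<lambda>l. if l \<in> D c0 then lam1 l else if l \<in> U then m l else undefined)"
    have res: "restrict lam0 (D c0) = lam1"
    proof
      fix l show "restrict lam0 (D c0) l = lam1 l"
      proof (cases "l \<in> D c0")
        case True then show ?thesis unfolding lam0_def by simp
      next
        case False
        have "lam1 l = undefined" using lam1P False by (rule PiE_arb)
        then show ?thesis using False by simp
      qed
    qed
    have lam0in: "lam0 \<in> U \<rightarrow>\<^sub>E X"
    proof (rule PiE_I)
      fix l assume l: "l \<in> U"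
      show "lam0 l \<in> X"
      proof (cases "l \<in> D c0")
        case True
        have "lam1 l \<in> X" using lam1P True by (rule PiE_mem)
        then show ?thesis using True unfolding lam0_def by simp
      next
        case False then show ?thesis using l m[OF l] unfolding lam0_def by simp
      qed
    next
      fix l assume "l \<notin> U" then show "lam0 l = undefined" using DU[OF c0(1)] unfolding lam0_def by auto
    qed
    have "(\<Sum>l\<in>U. g l (lam0 l)) = (\<Sum>l\<in>U - D c0. g l (lam0 l)) + (\<Sum>l\<in>D c0. g l (lam0 l))"
      by (rule sum.subset_diff[OF DU[OF c0(1)] finU])
    also have "(\<Sum>l\<in>U - D c0. g l (lam0 l)) = 0"
    proof (rule sum.neutral, rule ballI)
      fix l assume "l \<in> U - D c0"
      then show "g l (lam0 l) = 0" using m0 unfolding lam0_def by simp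
    qed
    also have "(\<Sum>l\<in>D c0. g l (lam0 l)) = (\<Sum>l\<in>D c0. g l (lam1 l))"
      by (intro sum.cong refl) (simp add: lam0_def)
    finally have "(\<Sum>l\<in>U. g l (lam0 l)) < Min (I ` C) + e" using lam1(2) c0(2) by simp
    moreover have "lam0 \<in> {lam \<in> U \<rightarrow>\<^sub>E X. \<exists>c\<in>C. restrict lam (D c) \<in> A c}"
      using lam0in res lam1(1) c0(1) by auto
    ultimately show "\<exists>z\<in>(\<lambda>lam. \<Sum>l\<in>U. g l (lam l)) ` {lam \<in> U \<rightarrow>\<^sub>E X. \<exists>c\<in>C. restrict lam (D c) \<in> A c}.
        z < Min (I ` C) + e" by blast
  qed
qed

lemma dist_child: "distinct (concat (map leaves cs)) \<Longrightarrow> c \<in> set cs \<Longrightarrow> distinct (leaves c)"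
  by (induction cs) auto

lemma disj_child: "distinct (concat (map leaves cs)) \<Longrightarrow> c1 \<in> set cs \<Longrightarrow> c2 \<in> set cs \<Longrightarrow> c1 \<noteq> c2
  \<Longrightarrow> set (leaves c1) \<inter> set (leaves c2) = {}"
proof (induction cs)
  case Nil then show ?case by simp
next
  case (Cons a cs)
  have d: "distinct (leaves a)" "distinct (concat (map leaves cs))"
    "set (leaves a) \<inter> (\<Union>x\<in>set cs. set (leaves x)) = {}" using Cons.prems(1) by simp_all
  show ?case
  proof (cases "c1 = a")
    case True
    then have "c2 \<in> set cs" using Cons.prems by simp
    then show ?thesis using d(3) True by blast
  next
    case F1: False
    then have c1: "c1 \<in> set cs" using Cons.prems by simp
    show ?thesis
    proof (cases "c2 = a")
      case True then show ?thesis using d(3) c1 by blast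
    next
      case False
      then have "c2 \<in> set cs" using Cons.prems by simp
      then show ?thesis using Cons.IH[OF d(2) c1 _ Cons.prems(4)] by blast
    qed
  qed
qed

lemma sub_props:
  "s \<in> set (nodes_list T) \<Longrightarrow> set (leaves s) \<subseteq> set (leaves T) \<and>
     (internal_nonempty T \<longrightarrow> internal_nonempty s) \<and> (distinct (leaves T) \<longrightarrow> distinct (leaves s))"
proof (induction T)
  case (Leaf x) then show ?case by simp
next
  case (Node lab cs)
  show ?case
  proof (cases "s = Node lab cs")
    case True then show ?thesis by simp
  next
    case False
    then obtain c where c: "c \<in> set cs" "s \<in> set (nodes_list c)" using Node.prems by auto
    have IH: "set (leaves s) \<subseteq> set (leaves c) \<and>
     (internal_nonempty c \<longrightarrow> internal_nonempty s) \<and> (distinct (leaves c) \<longrightarrow> distinct (leaves s))"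
      using Node.IH[OF c] .
    have "set (leaves c) \<subseteq> set (leaves (Node lab cs))" using c(1) by auto
    moreover have "internal_nonempty (Node lab cs) \<longrightarrow> internal_nonempty c" using c(1) by simp
    moreover have "distinct (leaves (Node lab cs)) \<longrightarrow> distinct (leaves c)"
      using c(1) dist_child by auto
    ultimately show ?thesis using IH by blast
  qed
qed

lemma desc_leaf[simp]: "desc (Leaf l) = {l}" by (simp add: desc_def)
lemma desc_node: "desc (Node lab cs) = (\<Union>c\<in>set cs. desc c)" by (simp add: desc_def)
lemma finite_desc[simp]: "finite (desc s)" by (simp add: desc_def)

lemma val_local: "(\<And>l. l \<in> desc s \<Longrightarrow> lam l = lam' l) \<Longrightarrow> val s lam = val s lam'"
proof (induction s lam rule: val.induct)
  case (1 a lam) then show ?case by simp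
next
  case (2 cs lam)
  have "map (\<lambda>c. val c lam) cs = map (\<lambda>c. val c lam') cs"
  proof (rule map_cong[OF refl])
    fix c assume c: "c \<in> set cs"
    show "val c lam = val c lam'"
      using 2(1)[OF c] 2(2) c unfolding desc_node by blast
  qed
  then show ?case by simp
next
  case (3 cs lam)
  have "map (\<lambda>c. val c lam) cs = map (\<lambda>c. val c lam') cs"
  proof (rule map_cong[OF refl])
    fix c assume c: "c \<in> set cs"
    show "val c lam = val c lam'"
      using 3(1)[OF c] 3(2) c unfolding desc_node by blast
  qed
  then show ?case by simp
qed

lemma val_const: "internal_nonempty s \<Longrightarrow> val s (\<lambda>_. y) = y"
proof (induction s "\<lambda>_::'a. y" rule: val.induct)
  case (1 a) then show ?case by simp
next
  case (2 cs)
  have "set (map (\<lambda>c. val c (\<lambda>_. y)) cs) = {y}" using 2 by (cases cs) auto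
  then show ?case by simp
next
  case (3 cs)
  have "set (map (\<lambda>c. val c (\<lambda>_. y)) cs) = {y}" using 3 by (cases cs) auto
  then show ?case by simp
qed

lemma win_max: "cs \<noteq> [] \<Longrightarrow> win \<theta> (Node LMAX cs) lam \<longleftrightarrow> (\<exists>c\<in>set cs. win \<theta> c lam)"
  unfolding win_def by (simp add: Max_ge_iff)

lemma win_min: "cs \<noteq> [] \<Longrightarrow> win \<theta> (Node LMIN cs) lam \<longleftrightarrow> (\<forall>c\<in>set cs. win \<theta> c lam)"
  unfolding win_def by simp

lemma Alt_ne:
  assumes ef: "exp_family b \<Theta>" and th: "\<theta> \<in> mean_set b \<Theta>" and ine: "internal_nonempty c"
  shows "Alt b \<Theta> \<theta> T c mu \<noteq> {}"
proof -
  obtain y where y: "y \<in> mean_set b \<Theta>" "win \<theta> T mu \<longleftrightarrow> y < \<theta>"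
  proof (cases "win \<theta> T mu")
    case True
    obtain y where "y \<in> mean_set b \<Theta>" "y < \<theta>" using exists_below[OF ef th] by blast
    then show ?thesis using that True by blast
  next
    case False then show ?thesis using that th by simp
  qed
  define lam where "lam = restrict (\<lambda>_. y) (desc c)"
  have "lam \<in> desc c \<rightarrow>\<^sub>E mean_set b \<Theta>" unfolding lam_def using y(1) by simp
  moreover have "val c lam = y"
  proof -
    have "val c lam = val c (\<lambda>_. y)" by (rule val_local) (simp add: lam_def)
    then show ?thesis using val_const[OF ine] by simp
  qed
  then have "win \<theta> c lam \<longleftrightarrow> \<not> y < \<theta>" unfolding win_def by auto
  ultimately have "lam \<in> Alt b \<Theta> \<theta> T c mu" unfolding Alt_def using y(2) by simp
  then show ?thesis by blast
qed

lemma restr_Alt: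
  assumes lam: "lam \<in> D \<rightarrow>\<^sub>E mean_set b \<Theta>" and sub: "desc c \<subseteq> D"
  shows "restrict lam (desc c) \<in> Alt b \<Theta> \<theta> T c mu \<longleftrightarrow> win \<theta> c lam \<noteq> win \<theta> T mu"
proof -
  have "restrict lam (desc c) \<in> desc c \<rightarrow>\<^sub>E mean_set b \<Theta>"
    unfolding restrict_PiE_iff using lam sub by (blast intro: PiE_mem)
  moreover have "val c (restrict lam (desc c)) = val c lam" by (rule val_local) simp
  ultimately show ?thesis unfolding Alt_def win_def by simp
qed

lemma node_sum:
  assumes ef: "exp_family b \<Theta>" and ine: "internal_nonempty (Node lab cs)"
    and dis: "distinct (leaves (Node lab cs))"
    and muX: "\<And>l. l \<in> desc (Node lab cs) \<Longrightarrow> mu l \<in> mean_set b \<Theta>"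
    and th: "\<theta> \<in> mean_set b \<Theta>"
    and iff: "\<And>lam. (win \<theta> (Node lab cs) lam \<noteq> win \<theta> T mu) \<longleftrightarrow> (\<forall>c\<in>set cs. win \<theta> c lam \<noteq> win \<theta> T mu)"
  shows "GLR b \<Theta> \<theta> T (Node lab cs) N mu = (\<Sum>c\<in>set cs. GLR b \<Theta> \<theta> T c N mu)"
proof -
  let ?s = "Node lab cs"
  let ?X = "mean_set b \<Theta>"
  have dsub: "desc c \<subseteq> desc ?s" if "c \<in> set cs" for c using that unfolding desc_node by blast
  have eq: "Alt b \<Theta> \<theta> T ?s mu = {lam \<in> desc ?s \<rightarrow>\<^sub>E ?X. \<forall>c\<in>set cs. restrict lam (desc c) \<in> Alt b \<Theta> \<theta> T c mu}"
  proof (rule set_eqI)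
    fix lam
    show "lam \<in> Alt b \<Theta> \<theta> T ?s mu \<longleftrightarrow> lam \<in> {lam \<in> desc ?s \<rightarrow>\<^sub>E ?X. \<forall>c\<in>set cs. restrict lam (desc c) \<in> Alt b \<Theta> \<theta> T c mu}"
    proof (cases "lam \<in> desc ?s \<rightarrow>\<^sub>E ?X")
      case True
      have "(\<forall>c\<in>set cs. restrict lam (desc c) \<in> Alt b \<Theta> \<theta> T c mu) \<longleftrightarrow> (\<forall>c\<in>set cs. win \<theta> c lam \<noteq> win \<theta> T mu)"
        using restr_Alt[OF True dsub] by blast
      then show ?thesis using True iff[of lam] unfolding Alt_def[of b \<Theta> \<theta> T ?s] by simp
    next
      case False then show ?thesis unfolding Alt_def[of b \<Theta> \<theta> T ?s] by simp
    qed
  qed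
  have disj: "desc c \<inter> desc c' = {}" if "c \<in> set cs" "c' \<in> set cs" "c \<noteq> c'" for c c'
    using disj_child[of cs c c'] dis that unfolding desc_def by simp
  have nn: "0 \<le> real (N l) * kl b \<Theta> (mu l) y" if "l \<in> desc ?s" "y \<in> ?X" for l y
    using kl_nonneg[OF ef muX[OF that(1)] that(2)] by simp
  show ?thesis unfolding GLR_def eq
    by (rule sum_inf[where g="\<lambda>l y. real (N l) * kl b \<Theta> (mu l) y" and D=desc
          and A="\<lambda>c. Alt b \<Theta> \<theta> T c mu" and X="?X", OF _ _ disj desc_node Alt_ne[OF ef th] _ nn])
       (use ine in \<open>auto simp: Alt_def\<close>)
qed

lemma node_min:
  assumes ef: "exp_family b \<Theta>" and ine: "internal_nonempty (Node lab cs)"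
    and muX: "\<And>l. l \<in> desc (Node lab cs) \<Longrightarrow> mu l \<in> mean_set b \<Theta>"
    and th: "\<theta> \<in> mean_set b \<Theta>"
    and iff: "\<And>lam. (win \<theta> (Node lab cs) lam \<noteq> win \<theta> T mu) \<longleftrightarrow> (\<exists>c\<in>set cs. win \<theta> c lam \<noteq> win \<theta> T mu)"
  shows "GLR b \<Theta> \<theta> T (Node lab cs) N mu = Min ((\<lambda>c. GLR b \<Theta> \<theta> T c N mu) ` set cs)"
proof -
  let ?s = "Node lab cs"
  let ?X = "mean_set b \<Theta>"
  have dsub: "desc c \<subseteq> desc ?s" if "c \<in> set cs" for c using that unfolding desc_node by blast
  have eq: "Alt b \<Theta> \<theta> T ?s mu = {lam \<in> desc ?s \<rightarrow>\<^sub>E ?X. \<exists>c\<in>set cs. restrict lam (desc c) \<in> Alt b \<Theta> \<theta> T c mu}"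
  proof (rule set_eqI)
    fix lam
    show "lam \<in> Alt b \<Theta> \<theta> T ?s mu \<longleftrightarrow> lam \<in> {lam \<in> desc ?s \<rightarrow>\<^sub>E ?X. \<exists>c\<in>set cs. restrict lam (desc c) \<in> Alt b \<Theta> \<theta> T c mu}"
    proof (cases "lam \<in> desc ?s \<rightarrow>\<^sub>E ?X")
      case True
      have "(\<exists>c\<in>set cs. restrict lam (desc c) \<in> Alt b \<Theta> \<theta> T c mu) \<longleftrightarrow> (\<exists>c\<in>set cs. win \<theta> c lam \<noteq> win \<theta> T mu)"
        using restr_Alt[OF True dsub] by blast
      then show ?thesis using True iff[of lam] unfolding Alt_def[of b \<Theta> \<theta> T ?s] by simp
    next
      case False then show ?thesis unfolding Alt_def[of b \<Theta> \<theta> T ?s] by simp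
    qed
  qed
  have nn: "0 \<le> real (N l) * kl b \<Theta> (mu l) y" if "l \<in> desc ?s" "y \<in> ?X" for l y
    using kl_nonneg[OF ef muX[OF that(1)] that(2)] by simp
  have m0: "real (N l) * kl b \<Theta> (mu l) (mu l) = 0" for l by (simp add: kl_self)
  have Cne: "set cs \<noteq> {}" using ine by simp
  show ?thesis unfolding GLR_def eq
    by (rule min_inf[where g="\<lambda>l y. real (N l) * kl b \<Theta> (mu l) y" and D=desc
          and A="\<lambda>c. Alt b \<Theta> \<theta> T c mu" and X="?X" and m=mu, OF _ Cne _ desc_node Alt_ne[OF ef th] _ nn muX m0])
       (use ine in \<open>auto simp: Alt_def\<close>)
qed

lemma leaf_case:
  assumes ef: "exp_family b \<Theta>" and th: "\<theta> \<in> mean_set b \<Theta>" and mux: "mu l \<in> mean_set b \<Theta>"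
  shows "GLR b \<Theta> \<theta> T (Leaf l) N mu =
    (if win \<theta> T mu then (if \<theta> \<le> mu l then real (N l) * kl b \<Theta> (mu l) \<theta> else 0)
     else (if mu l < \<theta> then real (N l) * kl b \<Theta> (mu l) \<theta> else 0))"
proof -
  let ?X = "mean_set b \<Theta>"
  let ?w = "win \<theta> T mu"
  have img: "(\<lambda>lam. \<Sum>l'\<in>desc (Leaf l). real (N l') * kl b \<Theta> (mu l') (lam l')) ` Alt b \<Theta> \<theta> T (Leaf l) mu
     = (\<lambda>y. real (N l) * kl b \<Theta> (mu l) y) ` {y \<in> ?X. (\<theta> \<le> y) \<noteq> ?w}"
  proof (rule set_eqI, rule iffI)
    fix z assume "z \<in> (\<lambda>lam. \<Sum>l'\<in>desc (Leaf l). real (N l') * kl b \<Theta> (mu l') (lam l')) ` Alt b \<Theta> \<theta> T (Leaf l) mu"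
    then obtain lam where lam: "lam \<in> {l} \<rightarrow>\<^sub>E ?X" "(\<theta> \<le> lam l) \<noteq> ?w"
      "z = real (N l) * kl b \<Theta> (mu l) (lam l)"
      unfolding Alt_def win_def[of \<theta> "Leaf l"] by auto
    have "lam l \<in> ?X" using lam(1) by (rule PiE_mem) simp
    then show "z \<in> (\<lambda>y. real (N l) * kl b \<Theta> (mu l) y) ` {y \<in> ?X. (\<theta> \<le> y) \<noteq> ?w}"
      using lam(2,3) by blast
  next
    fix z assume "z \<in> (\<lambda>y. real (N l) * kl b \<Theta> (mu l) y) ` {y \<in> ?X. (\<theta> \<le> y) \<noteq> ?w}"
    then obtain y where y: "y \<in> ?X" "(\<theta> \<le> y) \<noteq> ?w" "z = real (N l) * kl b \<Theta> (mu l) y" by blast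
    define lam where "lam = restrict (\<lambda>_. y) {l}"
    have "lam \<in> Alt b \<Theta> \<theta> T (Leaf l) mu"
      unfolding Alt_def win_def[of \<theta> "Leaf l"] lam_def using y(1,2) by simp
    moreover have "z = (\<Sum>l'\<in>desc (Leaf l). real (N l') * kl b \<Theta> (mu l') (lam l'))"
      using y(3) unfolding lam_def by simp
    ultimately show "z \<in> (\<lambda>lam. \<Sum>l'\<in>desc (Leaf l). real (N l') * kl b \<Theta> (mu l') (lam l')) ` Alt b \<Theta> \<theta> T (Leaf l) mu"
      by blast
  qed
  show ?thesis
  proof (cases ?w)
    case True
    have "{y \<in> ?X. (\<theta> \<le> y) \<noteq> ?w} = {y \<in> ?X. y < \<theta>}" using True by auto
    then show ?thesis unfolding GLR_def img using True leaf_inf_below[OF ef th mux, of "real (N l)"] by simp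
  next
    case False
    have "{y \<in> ?X. (\<theta> \<le> y) \<noteq> ?w} = {y \<in> ?X. \<theta> \<le> y}" using False by auto
    then show ?thesis unfolding GLR_def img using False leaf_inf_above[OF ef th mux, of "real (N l)"] by simp
  qed
qed

lemma main_fixed:
  fixes T :: "'a gtree" and b :: "real \<Rightarrow> real" and \<Theta> :: "real set" and \<theta> :: real
    and N :: "'a \<Rightarrow> nat" and mu :: "'a \<Rightarrow> real"
  assumes wf: "wf_tree T"
    and ef: "exp_family b \<Theta>"
    and th: "\<theta> \<in> mean_set b \<Theta>"
    and muX: "\<And>l. l \<in> desc T \<Longrightarrow> mu l \<in> mean_set b \<Theta>"
    and s: "s \<in> nodes T"
  shows "(win \<theta> T mu \<longrightarrow>
       (\<forall>l. s = Leaf l \<longrightarrow> GLR b \<Theta> \<theta> T s N mu =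
            (if mu l \<ge> \<theta> then real (N l) * kl b \<Theta> (mu l) \<theta> else 0)) \<and>
       (\<forall>cs. s = Node LMAX cs \<longrightarrow> GLR b \<Theta> \<theta> T s N mu =
            (\<Sum>c\<in>children s. GLR b \<Theta> \<theta> T c N mu)) \<and>
       (\<forall>cs. s = Node LMIN cs \<longrightarrow> GLR b \<Theta> \<theta> T s N mu =
            Min ((\<lambda>c. GLR b \<Theta> \<theta> T c N mu) ` children s))) \<and>
    (\<not> win \<theta> T mu \<longrightarrow>
       (\<forall>l. s = Leaf l \<longrightarrow> GLR b \<Theta> \<theta> T s N mu =
            (if mu l < \<theta> then real (N l) * kl b \<Theta> (mu l) \<theta> else 0)) \<and>
       (\<forall>cs. s = Node LMIN cs \<longrightarrow> GLR b \<Theta> \<theta> T s N mu =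
            (\<Sum>c\<in>children s. GLR b \<Theta> \<theta> T c N mu)) \<and>
       (\<forall>cs. s = Node LMAX cs \<longrightarrow> GLR b \<Theta> \<theta> T s N mu =
            Min ((\<lambda>c. GLR b \<Theta> \<theta> T c N mu) ` children s)))"
proof -
  have props: "set (leaves s) \<subseteq> set (leaves T) \<and>
     (internal_nonempty T \<longrightarrow> internal_nonempty s) \<and> (distinct (leaves T) \<longrightarrow> distinct (leaves s))"
    using s unfolding nodes_def by (rule sub_props)
  have ine: "internal_nonempty s" and dis: "distinct (leaves s)"
    using props wf unfolding wf_tree_def by simp_all
  have muXs: "mu l \<in> mean_set b \<Theta>" if "l \<in> desc s" for l
    using muX props that unfolding desc_def by blast
  show ?thesis
  proof (cases s)
    case (Leaf l)
    have "mu l \<in> mean_set b \<Theta>" using muXs Leaf by simp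
    then show ?thesis using leaf_case[OF ef th, of mu l T N] Leaf by simp
  next
    case (Node lab cs)
    have csne: "cs \<noteq> []" using ine Node by simp
    have ine': "internal_nonempty (Node lab cs)" and dis': "distinct (leaves (Node lab cs))"
      and muX': "\<And>l. l \<in> desc (Node lab cs) \<Longrightarrow> mu l \<in> mean_set b \<Theta>"
      using ine dis muXs Node by simp_all
    show ?thesis
    proof (cases lab)
      case LMAX
      have A: "win \<theta> T mu \<Longrightarrow> GLR b \<Theta> \<theta> T (Node lab cs) N mu = (\<Sum>c\<in>set cs. GLR b \<Theta> \<theta> T c N mu)"
        by (rule node_sum[OF ef ine' dis' muX' th]) (use LMAX win_max[OF csne] in auto)
      have B: "\<not> win \<theta> T mu \<Longrightarrow> GLR b \<Theta> \<theta> T (Node lab cs) N mu = Min ((\<lambda>c. GLR b \<Theta> \<theta> T c N mu) ` set cs)"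
        by (rule node_min[OF ef ine' muX' th]) (use LMAX win_max[OF csne] in auto)
      show ?thesis using A B Node LMAX by simp
    next
      case LMIN
      have A: "\<not> win \<theta> T mu \<Longrightarrow> GLR b \<Theta> \<theta> T (Node lab cs) N mu = (\<Sum>c\<in>set cs. GLR b \<Theta> \<theta> T c N mu)"
        by (rule node_sum[OF ef ine' dis' muX' th]) (use LMIN win_min[OF csne] in auto)
      have B: "win \<theta> T mu \<Longrightarrow> GLR b \<Theta> \<theta> T (Node lab cs) N mu = Min ((\<lambda>c. GLR b \<Theta> \<theta> T c N mu) ` set cs)"
        by (rule node_min[OF ef ine' muX' th]) (use LMIN win_min[OF csne] in auto)
      show ?thesis using A B Node LMIN by simp
    qed
  qed
qed


theorem theorem3:
  fixes T :: "'a gtree" and b :: "real \<Rightarrow> real" and \<Theta> :: "real set" and \<theta> :: real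
    and N :: "nat \<Rightarrow> 'a \<Rightarrow> nat" and mu :: "nat \<Rightarrow> 'a \<Rightarrow> real"
  assumes "wf_tree T"
    and "exp_family b \<Theta>"
    and "\<theta> \<in> mean_set b \<Theta>"
    and "\<And>t l. l \<in> desc T \<Longrightarrow> mu t l \<in> mean_set b \<Theta>"
  shows "\<forall>t. \<forall>s\<in>nodes T.
    (win \<theta> T (mu t) \<longrightarrow>
       (\<forall>l. s = Leaf l \<longrightarrow> GLR b \<Theta> \<theta> T s (N t) (mu t) =
            (if mu t l \<ge> \<theta> then real (N t l) * kl b \<Theta> (mu t l) \<theta> else 0)) \<and>
       (\<forall>cs. s = Node LMAX cs \<longrightarrow> GLR b \<Theta> \<theta> T s (N t) (mu t) =
            (\<Sum>c\<in>children s. GLR b \<Theta> \<theta> T c (N t) (mu t))) \<and>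
       (\<forall>cs. s = Node LMIN cs \<longrightarrow> GLR b \<Theta> \<theta> T s (N t) (mu t) =
            Min ((\<lambda>c. GLR b \<Theta> \<theta> T c (N t) (mu t)) ` children s))) \<and>
    (\<not> win \<theta> T (mu t) \<longrightarrow>
       (\<forall>l. s = Leaf l \<longrightarrow> GLR b \<Theta> \<theta> T s (N t) (mu t) =
            (if mu t l < \<theta> then real (N t l) * kl b \<Theta> (mu t l) \<theta> else 0)) \<and>
       (\<forall>cs. s = Node LMIN cs \<longrightarrow> GLR b \<Theta> \<theta> T s (N t) (mu t) =
            (\<Sum>c\<in>children s. GLR b \<Theta> \<theta> T c (N t) (mu t))) \<and>
       (\<forall>cs. s = Node LMAX cs \<longrightarrow> GLR b \<Theta> \<theta> T s (N t) (mu t) =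
            Min ((\<lambda>c. GLR b \<Theta> \<theta> T c (N t) (mu t)) ` children s)))"
proof (intro allI ballI)
  fix t s assume s: "s \<in> nodes T"
  have muX: "\<And>l. l \<in> desc T \<Longrightarrow> mu t l \<in> mean_set b \<Theta>" by (rule assms(4))
  show "(win \<theta> T (mu t) \<longrightarrow>
       (\<forall>l. s = Leaf l \<longrightarrow> GLR b \<Theta> \<theta> T s (N t) (mu t) =
            (if mu t l \<ge> \<theta> then real (N t l) * kl b \<Theta> (mu t l) \<theta> else 0)) \<and>
       (\<forall>cs. s = Node LMAX cs \<longrightarrow> GLR b \<Theta> \<theta> T s (N t) (mu t) =
            (\<Sum>c\<in>children s. GLR b \<Theta> \<theta> T c (N t) (mu t))) \<and>
       (\<forall>cs. s = Node LMIN cs \<longrightarrow> GLR b \<Theta> \<theta> T s (N t) (mu t) =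
            Min ((\<lambda>c. GLR b \<Theta> \<theta> T c (N t) (mu t)) ` children s))) \<and>
    (\<not> win \<theta> T (mu t) \<longrightarrow>
       (\<forall>l. s = Leaf l \<longrightarrow> GLR b \<Theta> \<theta> T s (N t) (mu t) =
            (if mu t l < \<theta> then real (N t l) * kl b \<Theta> (mu t l) \<theta> else 0)) \<and>
       (\<forall>cs. s = Node LMIN cs \<longrightarrow> GLR b \<Theta> \<theta> T s (N t) (mu t) =
            (\<Sum>c\<in>children s. GLR b \<Theta> \<theta> T c (N t) (mu t))) \<and>
       (\<forall>cs. s = Node LMAX cs \<longrightarrow> GLR b \<Theta> \<theta> T s (N t) (mu t) =
            Min ((\<lambda>c. GLR b \<Theta> \<theta> T c (N t) (mu t)) ` children s)))"
    by (rule main_fixed[where mu="mu t" and N="N t", OF assms(1,2,3) muX s])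
qed

end
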